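(* Let $J$ be a Jacobi matrix and let $C_n,G_n$ be as defined in the context. (i) If $\sum_{n=1}^\infty[|b_n|+|a_n^2-1|]<\infty$, then for each $z\in\overline{\mathbb{D}}\setminus\{\pm1\}$, $A_0(z):=\sup_n[|G_n(z)|+|C_n(z)|]<\infty$, and $A_0(z)$ is bounded uniformly on compact subsets of $\overline{\mathbb{D}}\setminus\{\pm1\}$. (ii) If $\sum_{n=1}^\infty n[|b_n|+|a_n^2-1|]<\infty$, then there is a constant $A_1$ with $\sup_{n,\,z\in\overline{\mathbb{D}}}|G_n(z)|\le A_1$ and $\sup_{n,\,z\in\overline{\mathbb{D}}}\frac{|C_n(z)|}{1+n}\le A_1$. (iii) If $|b_n|+|a_n^2-1|\le CR^{-2n}$ for all $n$, for some $C$ and some $R>1$, then there is a constant $A_2$ such that for all $z$ with $|z|<R$ and all $n$, $|G_n(z)|+|C_n(z)|\le A_2(1+n)[\max(1,|z|)]^{2n}$.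
   Context: $J$ is a Jacobi matrix with diagonal entries $b_n\in\mathbb{R}$ and off-diagonal entries $a_n>0$ ($n\ge1$); set $a_0=1$. The orthonormal polynomials satisfy $p_{-1}=0$, $p_0=1$, $xp_n(x)=a_{n+1}p_{n+1}(x)+b_{n+1}p_n(x)+a_np_{n-1}(x)$. Define $c_n(z)=z^np_n(z+z^{-1})$, $g_n(z)=z^n\bigl(p_n(z+z^{-1})-a_nzp_{n-1}(z+z^{-1})\bigr)$, $C_n=a_1\cdots a_n\,c_n$, $G_n=a_1\cdots a_n\,g_n$ (polynomials in $z$). $\mathbb{D}=\{|z|<1\}$. *)

theory Defs
  imports "HOL-Analysis.Analysis" "HOL-Computational_Algebra.Polynomial"
begin

text \<open>Orthonormal polynomials p_n of the Jacobi matrix with diagonal entries b n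
  and off-diagonal entries a n (n >= 1), as real polynomials, from the recurrence
  x p_n = a_(n+1) p_(n+1) + b_(n+1) p_n + a_n p_(n-1), p_(-1) = 0, p_0 = 1.\<close>
fun jpoly :: "(nat \<Rightarrow> real) \<Rightarrow> (nat \<Rightarrow> real) \<Rightarrow> nat \<Rightarrow> real poly" where
  "jpoly a b 0 = 1"
| "jpoly a b (Suc 0) = smult (1 / a 1) [:- b 1, 1:]"
| "jpoly a b (Suc (Suc n)) =
     smult (1 / a (Suc (Suc n)))
       ([:- b (Suc (Suc n)), 1:] * jpoly a b (Suc n) - smult (a (Suc n)) (jpoly a b n))"

text \<open>For a polynomial q of degree at most n, zpoly n q is the polynomial in z
  equal to z^n q(z + 1/z) (for z \<noteq> 0): expand z^n (z+1/z)^k = z^(n-k) (z^2+1)^k.\<close>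
definition zpoly :: "nat \<Rightarrow> real poly \<Rightarrow> complex \<Rightarrow> complex" where
  "zpoly n q z = (\<Sum>k\<le>n. of_real (coeff q k) * z ^ (n - k) * (z\<^sup>2 + 1) ^ k)"

definition cfun :: "(nat \<Rightarrow> real) \<Rightarrow> (nat \<Rightarrow> real) \<Rightarrow> nat \<Rightarrow> complex \<Rightarrow> complex" where
  "cfun a b n z = zpoly n (jpoly a b n) z"

text \<open>g_n(z) = z^n (p_n(z+1/z) - a_n z p_(n-1)(z+1/z)) = c_n(z) - a_n z^2 c_(n-1)(z),
  with p_(-1) = 0 (so g_0 = c_0).\<close>
definition gfun :: "(nat \<Rightarrow> real) \<Rightarrow> (nat \<Rightarrow> real) \<Rightarrow> nat \<Rightarrow> complex \<Rightarrow> complex" where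
  "gfun a b n z = (if n = 0 then cfun a b 0 z
                   else cfun a b n z - of_real (a n) * z\<^sup>2 * cfun a b (n - 1) z)"

definition Cfun :: "(nat \<Rightarrow> real) \<Rightarrow> (nat \<Rightarrow> real) \<Rightarrow> nat \<Rightarrow> complex \<Rightarrow> complex" where
  "Cfun a b n z = of_real (\<Prod>i=1..n. a i) * cfun a b n z"

definition Gfun :: "(nat \<Rightarrow> real) \<Rightarrow> (nat \<Rightarrow> real) \<Rightarrow> nat \<Rightarrow> complex \<Rightarrow> complex" where
  "Gfun a b n z = of_real (\<Prod>i=1..n. a i) * gfun a b n z"

end

theory Submission
  imports Defs
begin


lemma zpoly_pCons0: "zpoly (Suc n) (pCons 0 q) z = (z\<^sup>2 + 1) * zpoly n q z"
proof -
  have "zpoly (Suc n) (pCons 0 q) z = (\<Sum>k\<le>n. of_real (coeff q k) * z ^ (n - k) * (z\<^sup>2 + 1) ^ Suc k)"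
    unfolding zpoly_def by (subst sum.atMost_Suc_shift) simp
  also have "\<dots> = (z\<^sup>2 + 1) * zpoly n q z"
    unfolding zpoly_def sum_distrib_left by (rule sum.cong) (auto simp: algebra_simps)
  finally show ?thesis .
qed

lemma zpoly_Suc: "degree q \<le> n \<Longrightarrow> zpoly (Suc n) q z = z * zpoly n q z"
proof -
  assume d: "degree q \<le> n"
  have "zpoly (Suc n) q z = (\<Sum>k\<le>n. of_real (coeff q k) * z ^ (Suc n - k) * (z\<^sup>2 + 1) ^ k)"
    unfolding zpoly_def using d by (simp add: coeff_eq_0)
  also have "\<dots> = z * zpoly n q z"
    unfolding zpoly_def sum_distrib_left by (rule sum.cong) (auto simp: algebra_simps Suc_diff_le)
  finally show ?thesis .
qed

lemma zpoly_add: "zpoly n (p + q) z = zpoly n p z + zpoly n q z"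
  unfolding zpoly_def by (simp add: sum.distrib algebra_simps)
lemma zpoly_diff: "zpoly n (p - q) z = zpoly n p z - zpoly n q z"
  unfolding zpoly_def by (simp add: sum_subtractf algebra_simps)
lemma zpoly_smult: "zpoly n (smult c p) z = of_real c * zpoly n p z"
  unfolding zpoly_def by (simp add: sum_distrib_left algebra_simps)

lemma lin_mult: "[:- (c::real), 1:] * q = pCons 0 q - smult c q"
  by (simp add: mult_pCons_left)

lemma deg_jpoly: "degree (jpoly a b n) \<le> n"
proof (induction a b n rule: jpoly.induct)
  case (1 a b) then show ?case by simp
next
  case (2 a b) then show ?case by (simp add: degree_smult_le order_trans[OF degree_smult_le])
next
  case (3 a b n)
  have h1: "degree ([:- b (Suc (Suc n)), 1:] * jpoly a b (Suc n)) \<le> Suc (Suc n)"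
    using degree_mult_le[of "[:- b (Suc (Suc n)), 1:]" "jpoly a b (Suc n)"] 3 by simp
  have h2: "degree (smult (a (Suc n)) (jpoly a b n)) \<le> Suc (Suc n)"
    using degree_smult_le[of "a (Suc n)" "jpoly a b n"] 3 by simp
  have "degree ([:- b (Suc (Suc n)), 1:] * jpoly a b (Suc n) - smult (a (Suc n)) (jpoly a b n)) \<le> Suc (Suc n)"
    using degree_diff_le[OF h1 h2] .
  then show ?case by (simp add: order_trans[OF degree_smult_le])
qed

lemma c0: "cfun a b 0 z = 1" unfolding cfun_def zpoly_def by simp

lemma crec:
  assumes "a (Suc n) \<noteq> 0"
  shows "of_real (a (Suc n)) * cfun a b (Suc n) z =
    (z\<^sup>2 + 1 - of_real (b (Suc n)) * z) * cfun a b n z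
    - (if n = 0 then 0 else of_real (a n) * z\<^sup>2 * cfun a b (n - 1) z)"
proof (cases n)
  case 0
  then show ?thesis using assms unfolding cfun_def zpoly_def
    by (simp add: algebra_simps)
next
  case (Suc m)
  have d1: "degree (jpoly a b (Suc m)) \<le> Suc m" by (rule deg_jpoly)
  have d0: "degree (jpoly a b m) \<le> m" by (rule deg_jpoly)
  have d0': "degree (jpoly a b m) \<le> Suc m" using d0 by simp
  have A: "zpoly (Suc (Suc m)) ([:- b (Suc (Suc m)), 1:] * jpoly a b (Suc m)) z
     = (z\<^sup>2 + 1 - of_real (b (Suc (Suc m))) * z) * zpoly (Suc m) (jpoly a b (Suc m)) z"
    unfolding lin_mult zpoly_diff zpoly_smult zpoly_pCons0 zpoly_Suc[OF d1]
    by (simp add: algebra_simps)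
  have B: "zpoly (Suc (Suc m)) (jpoly a b m) z = z\<^sup>2 * zpoly m (jpoly a b m) z"
    unfolding zpoly_Suc[OF d0'] zpoly_Suc[OF d0] by (simp add: power2_eq_square)
  have "cfun a b (Suc n) z = of_real (1 / a (Suc (Suc m))) *
     (zpoly (Suc (Suc m)) ([:- b (Suc (Suc m)), 1:] * jpoly a b (Suc m)) z
      - of_real (a (Suc m)) * zpoly (Suc (Suc m)) (jpoly a b m) z)"
    unfolding cfun_def Suc jpoly.simps zpoly_smult zpoly_diff ..
  also have "\<dots> = of_real (1 / a (Suc (Suc m))) *
     ((z\<^sup>2 + 1 - of_real (b (Suc (Suc m))) * z) * cfun a b (Suc m) z
      - of_real (a (Suc m)) * z\<^sup>2 * cfun a b m z)"
    unfolding A B cfun_def by (simp add: algebra_simps)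
  finally show ?thesis using assms Suc by (simp add: field_simps)
qed

lemma prod_Suc: "(\<Prod>i=1..Suc n. a i) = (\<Prod>i=1..n. a i) * (a (Suc n) :: real)"
  by (simp add: prod.cl_ivl_Suc mult.commute)

lemma C_Suc_formula:
  assumes apos: "\<And>n. n \<ge> 1 \<Longrightarrow> a n > 0"
  shows "Cfun a b (Suc n) z = (z\<^sup>2 + 1 - of_real (b (Suc n)) * z) * Cfun a b n z
     - (if n = 0 then 0 else of_real ((a n)\<^sup>2) * z\<^sup>2 * Cfun a b (n - 1) z)"
proof -
  have ne: "a (Suc n) \<noteq> 0" using apos[of "Suc n"] by simp
  have "Cfun a b (Suc n) z = of_real (\<Prod>i=1..n. a i) * (of_real (a (Suc n)) * cfun a b (Suc n) z)"
    unfolding Cfun_def prod_Suc by simp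
  also have "\<dots> = of_real (\<Prod>i=1..n. a i) * ((z\<^sup>2 + 1 - of_real (b (Suc n)) * z) * cfun a b n z
    - (if n = 0 then 0 else of_real (a n) * z\<^sup>2 * cfun a b (n - 1) z))"
    unfolding crec[of a n b z, OF ne] ..
  also have "\<dots> = (z\<^sup>2 + 1 - of_real (b (Suc n)) * z) * Cfun a b n z
     - (if n = 0 then 0 else of_real ((a n)\<^sup>2) * z\<^sup>2 * Cfun a b (n - 1) z)"
  proof (cases n)
    case 0 then show ?thesis by (simp add: Cfun_def)
  next
    case (Suc m)
    show ?thesis unfolding Suc Cfun_def prod_Suc by (simp add: algebra_simps power2_eq_square)
  qed
  finally show ?thesis .
qed

lemma G_formula:
  shows "Gfun a b n z = Cfun a b n z
     - (if n = 0 then 0 else of_real ((a n)\<^sup>2) * z\<^sup>2 * Cfun a b (n - 1) z)"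
proof (cases n)
  case 0 then show ?thesis by (simp add: Cfun_def Gfun_def gfun_def)
next
  case (Suc m)
  show ?thesis unfolding Suc Cfun_def Gfun_def gfun_def prod_Suc by (simp add: algebra_simps power2_eq_square)
qed

lemma CG_rec:
  assumes apos: "\<And>n. n \<ge> 1 \<Longrightarrow> a n > 0"
  shows "Cfun a b 0 z = 1" "Gfun a b 0 z = 1"
   "Gfun a b (Suc n) z = Gfun a b n z + (- of_real (b (Suc n)) * z + of_real (1 - (a (Suc n))\<^sup>2) * z\<^sup>2) * Cfun a b n z"
   "Cfun a b (Suc n) z = (z\<^sup>2 - of_real (b (Suc n)) * z) * Cfun a b n z + Gfun a b n z"
proof -
  show "Cfun a b 0 z = 1" by (simp add: Cfun_def c0)
  show "Gfun a b 0 z = 1" by (simp add: Gfun_def gfun_def c0)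
  show C: "Cfun a b (Suc n) z = (z\<^sup>2 - of_real (b (Suc n)) * z) * Cfun a b n z + Gfun a b n z"
    apply (subst C_Suc_formula[where a=a and n=n and b=b and z=z, OF apos], assumption)
    apply (subst G_formula[of a b n z])
    by (simp add: algebra_simps)
  show "Gfun a b (Suc n) z = Gfun a b n z + (- of_real (b (Suc n)) * z + of_real (1 - (a (Suc n))\<^sup>2) * z\<^sup>2) * Cfun a b n z"
    unfolding G_formula[of a b "Suc n"] by (simp add: C algebra_simps)
qed



lemma step_real:
  fixes u v u' v' d r2 P \<rho> m :: real
  assumes u': "u' \<le> u + d * v" and v': "v' \<le> (r2 + d) * v + u"
    and d: "0 \<le> d" and r2: "1 \<le> r2" and m: "0 \<le> m"
    and u: "u \<le> P * \<rho>" and v: "v \<le> (m + 1) * (P * \<rho>)" and Q: "0 \<le> P * \<rho>"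
  shows "u' \<le> P * (1 + (m+1) * d) * (\<rho> * r2)"
    and "v' \<le> (m + 2) * (P * (1 + (m+1) * d) * (\<rho> * r2))"
proof -
  define Q where "Q = P * \<rho>"
  have Q0: "0 \<le> Q" using Q Q_def by simp
  have "d * v \<le> d * ((m+1) * Q)" using mult_left_mono[OF v d] Q_def by simp
  then have "u' \<le> Q * (1 + (m+1) * d)" using u' u Q_def by (simp add: algebra_simps)
  also have "\<dots> \<le> Q * (1 + (m+1) * d) * r2"
    using mult_left_mono[OF r2, of "Q * (1 + (m+1) * d)"] Q0 d m by simp
  finally show "u' \<le> P * (1 + (m+1) * d) * (\<rho> * r2)" by (simp add: Q_def algebra_simps)
  have "(r2 + d) * v \<le> (r2 + d) * ((m+1) * Q)" using mult_left_mono[OF v] d r2 Q_def by simp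
  then have "v' \<le> (r2 + d) * ((m+1) * Q) + Q" using v' u Q_def by simp
  also have "\<dots> \<le> (m + 2) * (Q * (1 + (m+1) * d) * r2)"
  proof -
    have "(m + 2) * (Q * (1 + (m+1) * d) * r2) - ((r2 + d) * ((m+1) * Q) + Q)
        = Q * ((r2 - 1) + (m+1) * d * ((m+2) * r2 - 1))" by (simp add: algebra_simps)
    moreover have h: "0 \<le> (m+1) * d * ((m+2) * r2 - 1)"
    proof -
      have "(m+2) * r2 \<ge> 1 * 1" using mult_mono[of 1 "m+2" 1 r2] m r2 by simp
      then show ?thesis using m d by simp
    qed
    moreover have "0 \<le> Q * ((r2 - 1) + (m+1) * d * ((m+2) * r2 - 1))"
      using h Q0 r2 by simp
    ultimately show ?thesis by linarith
  qed
  finally show "v' \<le> (m + 2) * (P * (1 + (m+1) * d) * (\<rho> * r2))" by (simp add: Q_def algebra_simps)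
qed

lemma coef_bound:
  fixes z :: complex and \<beta> \<alpha> :: real
  shows "cmod (- of_real \<beta> * z + of_real \<alpha> * z\<^sup>2) \<le> (\<bar>\<beta>\<bar> + \<bar>\<alpha>\<bar>) * (cmod z + (cmod z)\<^sup>2)"
proof -
  have "cmod (- of_real \<beta> * z + of_real \<alpha> * z\<^sup>2) \<le> \<bar>\<beta>\<bar> * cmod z + \<bar>\<alpha>\<bar> * (cmod z)\<^sup>2"
    by (rule order_trans[OF norm_triangle_ineq]) (simp add: norm_mult norm_power)
  also have "\<dots> \<le> (\<bar>\<beta>\<bar> + \<bar>\<alpha>\<bar>) * (cmod z + (cmod z)\<^sup>2)"
    by (simp add: algebra_simps)
  finally show ?thesis .
qed

lemma coef_bound2:
  fixes z :: complex and \<beta> \<alpha> r :: real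
  assumes "cmod z \<le> r"
  shows "cmod (z\<^sup>2 - of_real \<beta> * z) \<le> r\<^sup>2 + (\<bar>\<beta>\<bar> + \<bar>\<alpha>\<bar>) * (cmod z + (cmod z)\<^sup>2)"
proof -
  have "cmod (z\<^sup>2 - of_real \<beta> * z) \<le> (cmod z)\<^sup>2 + \<bar>\<beta>\<bar> * cmod z"
    by (rule order_trans[OF norm_triangle_ineq4]) (simp add: norm_mult norm_power)
  also have "(cmod z)\<^sup>2 \<le> r\<^sup>2" using assms by (simp add: power_mono)
  finally have "cmod (z\<^sup>2 - of_real \<beta> * z) \<le> r\<^sup>2 + \<bar>\<beta>\<bar> * cmod z" by simp
  moreover have "\<bar>\<beta>\<bar> * cmod z \<le> (\<bar>\<beta>\<bar> + \<bar>\<alpha>\<bar>) * (cmod z + (cmod z)\<^sup>2)"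
    by (simp add: algebra_simps)
  ultimately show ?thesis by linarith
qed

lemma growth_bound:
  fixes G C :: "nat \<Rightarrow> complex" and z :: complex and \<beta> \<alpha> :: "nat \<Rightarrow> real"
  assumes G0: "G 0 = 1" and C0: "C 0 = 1"
    and Grec: "\<And>n. G (Suc n) = G n + (- of_real (\<beta> n) * z + of_real (\<alpha> n) * z\<^sup>2) * C n"
    and Crec: "\<And>n. C (Suc n) = (z\<^sup>2 - of_real (\<beta> n) * z) * C n + G n"
  shows "cmod (G n) \<le> (\<Prod>k<n. 1 + (real k + 1) * ((\<bar>\<beta> k\<bar> + \<bar>\<alpha> k\<bar>) * (cmod z + (cmod z)\<^sup>2))) * (max 1 (cmod z)) ^ (2 * n)
    \<and> cmod (C n) \<le> (real n + 1) * ((\<Prod>k<n. 1 + (real k + 1) * ((\<bar>\<beta> k\<bar> + \<bar>\<alpha> k\<bar>) * (cmod z + (cmod z)\<^sup>2))) * (max 1 (cmod z)) ^ (2 * n))"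
proof (induction n)
  case 0 then show ?case by (simp add: G0 C0)
next
  case (Suc n)
  define d where "d k = (\<bar>\<beta> k\<bar> + \<bar>\<alpha> k\<bar>) * (cmod z + (cmod z)\<^sup>2)" for k
  define r where "r = max 1 (cmod z)"
  define P where "P = (\<Prod>k<n. 1 + (real k + 1) * d k)"
  have d0: "0 \<le> d k" for k unfolding d_def by simp
  have P0: "0 \<le> P" unfolding P_def using d0 by (intro prod_nonneg) (simp add: add_nonneg_nonneg)
  have r1: "1 \<le> r" unfolding r_def by simp
  have zr: "cmod z \<le> r" unfolding r_def by simp
  have IH: "cmod (G n) \<le> P * r ^ (2 * n)" "cmod (C n) \<le> (real n + 1) * (P * r ^ (2 * n))"
    using Suc.IH unfolding P_def r_def d_def by auto
  have u': "cmod (G (Suc n)) \<le> cmod (G n) + d n * cmod (C n)"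
  proof -
    have "cmod (G (Suc n)) \<le> cmod (G n) + cmod (- of_real (\<beta> n) * z + of_real (\<alpha> n) * z\<^sup>2) * cmod (C n)"
      unfolding Grec by (rule order_trans[OF norm_triangle_ineq]) (simp add: norm_mult)
    also have "\<dots> \<le> cmod (G n) + d n * cmod (C n)"
      unfolding d_def by (intro add_left_mono mult_right_mono coef_bound) simp
    finally show ?thesis .
  qed
  have v': "cmod (C (Suc n)) \<le> (r\<^sup>2 + d n) * cmod (C n) + cmod (G n)"
  proof -
    have "cmod (C (Suc n)) \<le> cmod (z\<^sup>2 - of_real (\<beta> n) * z) * cmod (C n) + cmod (G n)"
      unfolding Crec by (rule order_trans[OF norm_triangle_ineq]) (simp add: norm_mult)
    also have "\<dots> \<le> (r\<^sup>2 + d n) * cmod (C n) + cmod (G n)"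
      unfolding d_def by (intro add_right_mono mult_right_mono coef_bound2 zr) simp
    finally show ?thesis .
  qed
  have Q: "0 \<le> P * r ^ (2 * n)" using P0 r1 by simp
  have r2: "1 \<le> r\<^sup>2" using r1 by (simp add: one_le_power)
  have m0: "0 \<le> real n" by simp
  note S = step_real[OF u' v' d0 r2 m0 IH Q]
  have e1: "P * (1 + (real n + 1) * d n) = (\<Prod>k<Suc n. 1 + (real k + 1) * d k)"
    unfolding P_def by simp
  have e2: "r ^ (2 * n) * r\<^sup>2 = r ^ (2 * Suc n)"
    by (simp add: power_add[symmetric] power2_eq_square[symmetric])
  have e3: "real n + 2 = real (Suc n) + 1" by simp
  show ?case using S unfolding e1 e2 e3 unfolding d_def r_def by simp
qed

lemma prod_exp_bound:
  fixes x :: "nat \<Rightarrow> real"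
  assumes "\<And>k. 0 \<le> x k"
  shows "(\<Prod>k<n. 1 + x k) \<le> exp (\<Sum>k<n. x k)"
proof -
  have "(\<Prod>k<n. 1 + x k) \<le> (\<Prod>k<n. exp (x k))"
    by (intro prod_mono) (use assms in \<open>auto simp: add_nonneg_nonneg exp_ge_add_one_self\<close>)
  also have "\<dots> = exp (\<Sum>k<n. x k)" by (simp add: exp_sum)
  finally show ?thesis .
qed

lemma disk_bound:
  fixes G C :: "nat \<Rightarrow> complex" and z :: complex and \<beta> \<alpha> :: "nat \<Rightarrow> real" and \<delta> E :: real
  assumes G0: "G 0 = 1" and C0: "C 0 = 1"
    and Grec: "\<And>n. G (Suc n) = G n + (- of_real (\<beta> n) * z + of_real (\<alpha> n) * z\<^sup>2) * C n"
    and Crec: "\<And>n. C (Suc n) = (z\<^sup>2 - of_real (\<beta> n) * z) * C n + G n"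
    and z1: "cmod z \<le> 1" and \<delta>0: "0 < \<delta>" and \<delta>: "\<delta> \<le> cmod (1 - z\<^sup>2)"
    and E: "\<And>n. (\<Sum>k<n. \<bar>\<beta> k\<bar> + \<bar>\<alpha> k\<bar>) \<le> E"
  shows "cmod (G n) + cmod (C n) \<le> 2 * exp (6 * E / \<delta>) * (1 + 1 / \<delta>)"
proof -
  define w where "w = z\<^sup>2"
  define H where "H n = G n - (1 - w) * C n" for n
  define \<epsilon> where "\<epsilon> k = \<bar>\<beta> k\<bar> + \<bar>\<alpha> k\<bar>" for k
  define S where "S n = cmod (G n) + cmod (H n)" for n
  have \<epsilon>0: "0 \<le> \<epsilon> k" for k unfolding \<epsilon>_def by simp
  have w0: "1 - w \<noteq> 0" using \<delta> \<delta>0 unfolding w_def by auto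
  have w1: "cmod w \<le> 1" unfolding w_def using z1 by (simp add: norm_power power_le_one)
  have w2: "cmod (1 - w) \<le> 2" using norm_triangle_ineq4[of 1 w] w1 by simp
  have Cb: "cmod (C n) \<le> S n / \<delta>" for n
  proof -
    have "C n = (G n - H n) / (1 - w)" unfolding H_def using w0 by (simp add: field_simps)
    then have "cmod (C n) = cmod (G n - H n) / cmod (1 - w)" by (simp add: norm_divide)
    also have "\<dots> \<le> S n / cmod (1 - w)" unfolding S_def
      by (intro divide_right_mono norm_triangle_ineq4) simp
    also have "\<dots> \<le> S n / \<delta>" using \<delta> \<delta>0 unfolding S_def w_def
      by (intro divide_left_mono) (auto intro!: mult_pos_pos)
    finally show ?thesis .
  qed
  have eb: "cmod (- of_real (\<beta> n) * z + of_real (\<alpha> n) * z\<^sup>2) \<le> 2 * \<epsilon> n" for n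
  proof -
    have "cmod z + (cmod z)\<^sup>2 \<le> 2" using z1 by (smt (verit) norm_ge_zero power_le_one)
    then have "\<epsilon> n * (cmod z + (cmod z)\<^sup>2) \<le> \<epsilon> n * 2" using \<epsilon>0 by (intro mult_left_mono) auto
    then show ?thesis using coef_bound[of "\<beta> n" z "\<alpha> n"] unfolding \<epsilon>_def by simp
  qed
  have fb: "cmod (of_real (\<beta> n) * z) \<le> \<epsilon> n" for n
  proof -
    have "\<bar>\<beta> n\<bar> * cmod z \<le> \<bar>\<beta> n\<bar> * 1" using z1 by (intro mult_left_mono) auto
    then show ?thesis unfolding \<epsilon>_def by (simp add: norm_mult)
  qed
  have Hrec: "H (Suc n) = w * H n + ((- of_real (\<beta> n) * z + of_real (\<alpha> n) * z\<^sup>2)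
       + (1 - w) * (of_real (\<beta> n) * z)) * C n" for n
    unfolding H_def Grec Crec w_def by (simp add: algebra_simps)
  have Sstep: "S (Suc n) \<le> S n * (1 + 6 * \<epsilon> n / \<delta>)" for n
  proof -
    have "cmod (G (Suc n)) \<le> cmod (G n) + 2 * \<epsilon> n * cmod (C n)"
      unfolding Grec by (rule order_trans[OF norm_triangle_ineq]) (use eb in \<open>auto simp: norm_mult intro: mult_right_mono\<close>)
    moreover have "cmod (H (Suc n)) \<le> cmod (H n) + 4 * \<epsilon> n * cmod (C n)"
    proof -
      have "cmod (w * H n) \<le> cmod (H n)" using w1 by (simp add: norm_mult mult_left_le_one_le)
      moreover have "cmod ((- of_real (\<beta> n) * z + of_real (\<alpha> n) * z\<^sup>2)
         + (1 - w) * (of_real (\<beta> n) * z)) \<le> 2 * \<epsilon> n + 2 * \<epsilon> n"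
      proof -
        have "cmod ((1 - w) * (of_real (\<beta> n) * z)) \<le> 2 * \<epsilon> n"
          using mult_mono[OF w2 fb[of n]] by (simp add: norm_mult del: norm_of_real)
        then show ?thesis using eb[of n] norm_triangle_ineq[of "- of_real (\<beta> n) * z + of_real (\<alpha> n) * z\<^sup>2" "(1 - w) * (of_real (\<beta> n) * z)"]
          by linarith
      qed
      ultimately show ?thesis unfolding Hrec
        by (intro order_trans[OF norm_triangle_ineq]) (auto simp: norm_mult intro!: add_mono mult_right_mono)
    qed
    ultimately have "S (Suc n) \<le> S n + 6 * \<epsilon> n * cmod (C n)" unfolding S_def by simp
    also have "\<dots> \<le> S n + 6 * \<epsilon> n * (S n / \<delta>)"
      using Cb[of n] \<epsilon>0[of n] by (intro add_left_mono mult_left_mono) auto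
    finally show ?thesis by (simp add: algebra_simps)
  qed
  have S0: "S 0 \<le> 2" unfolding S_def H_def G0 C0 using w1 by simp
  have Sb: "S n \<le> 2 * (\<Prod>k<n. 1 + 6 * \<epsilon> k / \<delta>)" for n
  proof (induction n)
    case 0 then show ?case using S0 by simp
  next
    case (Suc n)
    have "S (Suc n) \<le> S n * (1 + 6 * \<epsilon> n / \<delta>)" by (rule Sstep)
    also have "\<dots> \<le> 2 * (\<Prod>k<n. 1 + 6 * \<epsilon> k / \<delta>) * (1 + 6 * \<epsilon> n / \<delta>)"
      using Suc.IH \<epsilon>0[of n] \<delta>0 by (intro mult_right_mono) auto
    finally show ?case by (simp add: algebra_simps)
  qed
  have "(\<Prod>k<n. 1 + 6 * \<epsilon> k / \<delta>) \<le> exp (\<Sum>k<n. 6 * \<epsilon> k / \<delta>)"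
    using \<epsilon>0 \<delta>0 by (intro prod_exp_bound) auto
  also have "(\<Sum>k<n. 6 * \<epsilon> k / \<delta>) = 6 * (\<Sum>k<n. \<epsilon> k) / \<delta>"
    by (simp add: sum_distrib_left sum_divide_distrib)
  also have "\<dots> \<le> 6 * E / \<delta>" using E[of n] \<delta>0 unfolding \<epsilon>_def by (intro divide_right_mono) auto
  finally have P: "(\<Prod>k<n. 1 + 6 * \<epsilon> k / \<delta>) \<le> exp (6 * E / \<delta>)" by simp
  have Sn: "S n \<le> 2 * exp (6 * E / \<delta>)" using Sb[of n] P by linarith
  have "cmod (G n) + cmod (C n) \<le> S n + S n / \<delta>" using Cb[of n] norm_ge_zero[of "H n"] unfolding S_def by linarith
  also have "\<dots> = S n * (1 + 1 / \<delta>)" by (simp add: algebra_simps)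
  also have "\<dots> \<le> 2 * exp (6 * E / \<delta>) * (1 + 1 / \<delta>)"
    using Sn \<delta>0 by (intro mult_right_mono) auto
  finally show ?thesis .
qed



lemma geo_id:
  fixes q :: real
  shows "(1 - q)\<^sup>2 * (\<Sum>k<n. (real k + 1) * q ^ k) = 1 - (real n + 1) * q ^ n + real n * q ^ (Suc n)"
  by (induction n) (simp_all add: algebra_simps power2_eq_square)

lemma geo_bound:
  fixes q :: real
  assumes "0 \<le> q" "q < 1"
  shows "(\<Sum>k<n. (real k + 1) * q ^ k) \<le> 1 / (1 - q)\<^sup>2"
proof -
  have pos: "0 < (1 - q)\<^sup>2" using assms by simp
  have "real n * q ^ (Suc n) \<le> (real n + 1) * q ^ n"
  proof -
    have "real n * q ^ (Suc n) = (real n * q) * q ^ n" by simp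
    also have "\<dots> \<le> (real n + 1) * q ^ n"
    proof (intro mult_right_mono)
      have "real n * q \<le> real n * 1" using assms by (intro mult_left_mono) auto
      then show "real n * q \<le> real n + 1" by simp
    qed (use assms in auto)
    finally show ?thesis .
  qed
  then have "(1 - q)\<^sup>2 * (\<Sum>k<n. (real k + 1) * q ^ k) \<le> 1" unfolding geo_id by simp
  then show ?thesis using pos by (simp add: field_simps mult.commute)
qed

lemma powr_conv:
  fixes R :: real assumes "0 < R"
  shows "R powr (- 2 * real n) = (1 / R\<^sup>2) ^ n"
proof -
  have "R powr (- 2 * real n) = inverse (R powr (real (2 * n)))"
    by (simp add: powr_minus[symmetric])
  also have "\<dots> = inverse (R ^ (2 * n))" using assms powr_realpow[of R "2 * n"] by simp
  also have "\<dots> = (1 / R\<^sup>2) ^ n" by (simp add: power_mult power_one_over inverse_eq_divide)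
  finally show ?thesis .
qed


theorem theoremA2:
  fixes a b :: "nat \<Rightarrow> real"
  assumes apos: "\<And>n. n \<ge> 1 \<Longrightarrow> a n > 0"
  shows
   "(summable (\<lambda>n. \<bar>b (Suc n)\<bar> + \<bar>(a (Suc n))\<^sup>2 - 1\<bar>) \<longrightarrow>
       (\<forall>z. cmod z \<le> 1 \<and> z \<noteq> 1 \<and> z \<noteq> -1 \<longrightarrow>
           bdd_above (range (\<lambda>n. cmod (Gfun a b n z) + cmod (Cfun a b n z)))) \<and>
       (\<forall>K. compact K \<and> K \<subseteq> cball 0 1 - {1, -1} \<longrightarrow>
           (\<exists>M. \<forall>z\<in>K. \<forall>n. cmod (Gfun a b n z) + cmod (Cfun a b n z) \<le> M)))
    \<and>
    (summable (\<lambda>n. real (Suc n) * (\<bar>b (Suc n)\<bar> + \<bar>(a (Suc n))\<^sup>2 - 1\<bar>)) \<longrightarrow>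
       (\<exists>A1. \<forall>n z. cmod z \<le> 1 \<longrightarrow>
           cmod (Gfun a b n z) \<le> A1 \<and> cmod (Cfun a b n z) / (1 + real n) \<le> A1))
    \<and>
    (\<forall>C R. R > 1 \<and> (\<forall>n\<ge>1. \<bar>b n\<bar> + \<bar>(a n)\<^sup>2 - 1\<bar> \<le> C * R powr (- 2 * real n)) \<longrightarrow>
       (\<exists>A2. \<forall>z n. cmod z < R \<longrightarrow>
           cmod (Gfun a b n z) + cmod (Cfun a b n z)
             \<le> A2 * (1 + real n) * (max 1 (cmod z)) ^ (2 * n)))"
proof -
  define \<beta> where "\<beta> n = b (Suc n)" for n
  define \<alpha> where "\<alpha> n = 1 - (a (Suc n))\<^sup>2" for n
  define \<epsilon> where "\<epsilon> n = \<bar>b (Suc n)\<bar> + \<bar>(a (Suc n))\<^sup>2 - 1\<bar>" for n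
  have ee: "\<bar>\<beta> k\<bar> + \<bar>\<alpha> k\<bar> = \<epsilon> k" for k
    unfolding \<beta>_def \<alpha>_def \<epsilon>_def by (simp add: abs_minus_commute)
  have \<epsilon>0: "0 \<le> \<epsilon> k" for k unfolding \<epsilon>_def by simp
  have G0: "\<And>z. Gfun a b 0 z = 1" and C0: "\<And>z. Cfun a b 0 z = 1"
    using CG_rec[OF apos] by auto
  have Grec: "\<And>z n. Gfun a b (Suc n) z = Gfun a b n z + (- of_real (\<beta> n) * z + of_real (\<alpha> n) * z\<^sup>2) * Cfun a b n z"
    unfolding \<alpha>_def \<beta>_def using CG_rec(3)[OF apos] by simp
  have Crec: "\<And>z n. Cfun a b (Suc n) z = (z\<^sup>2 - of_real (\<beta> n) * z) * Cfun a b n z + Gfun a b n z"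
    unfolding \<beta>_def using CG_rec(4)[OF apos] by simp
  note DB = disk_bound[of "\<lambda>n. Gfun a b n z" "\<lambda>n. Cfun a b n z" \<beta> z \<alpha> for z, OF G0 C0 Grec Crec]
  note GB = growth_bound[of "\<lambda>n. Gfun a b n z" "\<lambda>n. Cfun a b n z" \<beta> z \<alpha> for z, OF G0 C0 Grec Crec]
  have part1: "summable \<epsilon> \<Longrightarrow>
       (\<forall>z. cmod z \<le> 1 \<and> z \<noteq> 1 \<and> z \<noteq> -1 \<longrightarrow>
           bdd_above (range (\<lambda>n. cmod (Gfun a b n z) + cmod (Cfun a b n z)))) \<and>
       (\<forall>K. compact K \<and> K \<subseteq> cball 0 1 - {1, -1} \<longrightarrow>
           (\<exists>M. \<forall>z\<in>K. \<forall>n. cmod (Gfun a b n z) + cmod (Cfun a b n z) \<le> M))"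
  proof -
    assume sm: "summable \<epsilon>"
    define E where "E = suminf \<epsilon>"
    have E: "(\<Sum>k<n. \<bar>\<beta> k\<bar> + \<bar>\<alpha> k\<bar>) \<le> E" for n
      unfolding ee E_def using sm \<epsilon>0 by (intro sum_le_suminf) auto
    have nz: "0 < cmod (1 - z\<^sup>2)" if "z \<noteq> 1" "z \<noteq> -1" for z :: complex
    proof -
      have "1 - z\<^sup>2 \<noteq> 0" using that power2_eq_1_iff[of z] by auto
      then show ?thesis by simp
    qed
    show ?thesis
    proof (intro conjI allI impI)
      fix z :: complex assume z: "cmod z \<le> 1 \<and> z \<noteq> 1 \<and> z \<noteq> -1"
      show "bdd_above (range (\<lambda>n. cmod (Gfun a b n z) + cmod (Cfun a b n z)))"
        using DB[OF _ nz order_refl E] z by (intro bdd_aboveI2) auto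
    next
      fix K :: "complex set" assume K: "compact K \<and> K \<subseteq> cball 0 1 - {1, -1}"
      show "\<exists>M. \<forall>z\<in>K. \<forall>n. cmod (Gfun a b n z) + cmod (Cfun a b n z) \<le> M"
      proof (cases "K = {}")
        case True then show ?thesis by auto
      next
        case False
        have "continuous_on K (\<lambda>z. cmod (1 - z\<^sup>2))" by (intro continuous_intros)
        then obtain x where x: "x \<in> K" and xm: "\<And>y. y \<in> K \<Longrightarrow> cmod (1 - x\<^sup>2) \<le> cmod (1 - y\<^sup>2)"
          using continuous_attains_inf[of K "\<lambda>z. cmod (1 - z\<^sup>2)"] K False by auto
        have xp: "0 < cmod (1 - x\<^sup>2)" using x K nz[of x] by auto
        show ?thesis
        proof (intro exI ballI allI)
          fix z n assume z: "z \<in> K"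
          have "cmod z \<le> 1" using z K by auto
          then show "cmod (Gfun a b n z) + cmod (Cfun a b n z) \<le> 2 * exp (6 * E / cmod (1 - x\<^sup>2)) * (1 + 1 / cmod (1 - x\<^sup>2))"
            using DB[OF _ xp xm[OF z] E] by blast
        qed
      qed
    qed
  qed
  have part2: "summable (\<lambda>n. real (Suc n) * \<epsilon> n) \<Longrightarrow>
       (\<exists>A1. \<forall>n z. cmod z \<le> 1 \<longrightarrow>
           cmod (Gfun a b n z) \<le> A1 \<and> cmod (Cfun a b n z) / (1 + real n) \<le> A1)"
  proof -
    assume sm: "summable (\<lambda>n. real (Suc n) * \<epsilon> n)"
    define E where "E = suminf (\<lambda>n. real (Suc n) * \<epsilon> n)"
    show ?thesis
    proof (intro exI allI impI conjI)
      fix n and z :: complex assume z: "cmod z \<le> 1"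
      have m1: "max 1 (cmod z) = 1" using z by simp
      define P where "P = (\<Prod>k<n. 1 + (real k + 1) * ((\<bar>\<beta> k\<bar> + \<bar>\<alpha> k\<bar>) * (cmod z + (cmod z)\<^sup>2)))"
      have zz: "cmod z + (cmod z)\<^sup>2 \<le> 2" using z by (smt (verit) norm_ge_zero power_le_one)
      have "P \<le> exp (\<Sum>k<n. (real k + 1) * ((\<bar>\<beta> k\<bar> + \<bar>\<alpha> k\<bar>) * (cmod z + (cmod z)\<^sup>2)))"
        unfolding P_def by (intro prod_exp_bound) simp
      also have "(\<Sum>k<n. (real k + 1) * ((\<bar>\<beta> k\<bar> + \<bar>\<alpha> k\<bar>) * (cmod z + (cmod z)\<^sup>2)))
           \<le> (\<Sum>k<n. 2 * (real (Suc k) * \<epsilon> k))"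
      proof (intro sum_mono)
        fix k
        have "(real k + 1) * \<epsilon> k * (cmod z + (cmod z)\<^sup>2) \<le> (real k + 1) * \<epsilon> k * 2"
          using zz \<epsilon>0[of k] by (intro mult_left_mono) auto
        then show "(real k + 1) * ((\<bar>\<beta> k\<bar> + \<bar>\<alpha> k\<bar>) * (cmod z + (cmod z)\<^sup>2)) \<le> 2 * (real (Suc k) * \<epsilon> k)"
          unfolding ee by (simp add: algebra_simps)
      qed
      also have "\<dots> = 2 * (\<Sum>k<n. real (Suc k) * \<epsilon> k)" by (simp add: sum_distrib_left)
      also have "\<dots> \<le> 2 * E" unfolding E_def using sm \<epsilon>0
        by (intro mult_left_mono sum_le_suminf) auto
      finally have PE: "P \<le> exp (2 * E)" by simp
      have gb: "cmod (Gfun a b n z) \<le> P" "cmod (Cfun a b n z) \<le> (real n + 1) * P"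
        using GB[of n z] unfolding m1 P_def by auto
      show "cmod (Gfun a b n z) \<le> exp (2 * E)" using gb PE by linarith
      have "cmod (Cfun a b n z) \<le> (1 + real n) * exp (2 * E)"
        using gb(2) PE by (smt (verit) mult_left_mono of_nat_0_le_iff)
      then show "cmod (Cfun a b n z) / (1 + real n) \<le> exp (2 * E)"
        by (simp add: divide_le_eq mult.commute)
    qed
  qed
  have part3: "\<exists>A2. \<forall>z n. cmod z < R \<longrightarrow>
           cmod (Gfun a b n z) + cmod (Cfun a b n z)
             \<le> A2 * (1 + real n) * (max 1 (cmod z)) ^ (2 * n)"
    if R: "R > 1" and hyp: "\<forall>n\<ge>1. \<bar>b n\<bar> + \<bar>(a n)\<^sup>2 - 1\<bar> \<le> C * R powr (- 2 * real n)" for C R :: real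
  proof -
    define q where "q = 1 / R\<^sup>2"
    have q0: "0 \<le> q" and q1: "q < 1" unfolding q_def using R by (auto simp: field_simps)
    have epsq: "\<epsilon> k \<le> C * q ^ (Suc k)" for k
      using hyp[rule_format, of "Suc k"] powr_conv[of R "Suc k"] R unfolding \<epsilon>_def q_def by simp
    have C0: "0 \<le> C"
    proof -
      have "0 \<le> C * q" using epsq[of 0] \<epsilon>0[of 0] by simp
      moreover have "0 < q" unfolding q_def using R by simp
      ultimately show ?thesis by (simp add: zero_le_mult_iff)
    qed
    define A where "A = 2 * exp (2 * C * (1 / (1 - q)\<^sup>2))"
    show ?thesis
    proof (intro exI allI impI)
      fix z :: complex and n assume z: "cmod z < R"
      define r where "r = max 1 (cmod z)"
      define P where "P = (\<Prod>k<n. 1 + (real k + 1) * ((\<bar>\<beta> k\<bar> + \<bar>\<alpha> k\<bar>) * (cmod z + (cmod z)\<^sup>2)))"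
      have zz: "cmod z + (cmod z)\<^sup>2 \<le> 2 * R\<^sup>2"
      proof -
        have "cmod z \<le> R\<^sup>2" using z R by (smt (verit) one_less_power power2_eq_square mult_le_cancel_left1)
        moreover have "(cmod z)\<^sup>2 \<le> R\<^sup>2" using z by (intro power_mono) auto
        ultimately show ?thesis by simp
      qed
      have "P \<le> exp (\<Sum>k<n. (real k + 1) * ((\<bar>\<beta> k\<bar> + \<bar>\<alpha> k\<bar>) * (cmod z + (cmod z)\<^sup>2)))"
        unfolding P_def by (intro prod_exp_bound) simp
      also have "(\<Sum>k<n. (real k + 1) * ((\<bar>\<beta> k\<bar> + \<bar>\<alpha> k\<bar>) * (cmod z + (cmod z)\<^sup>2)))
           \<le> (\<Sum>k<n. 2 * C * ((real k + 1) * q ^ k))"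
      proof (intro sum_mono)
        fix k
        have "\<epsilon> k * (cmod z + (cmod z)\<^sup>2) \<le> (C * q ^ (Suc k)) * (2 * R\<^sup>2)"
          using zz epsq[of k] \<epsilon>0[of k] C0 q0 by (intro mult_mono) auto
        also have "\<dots> = 2 * C * q ^ k" unfolding q_def using R by (simp add: field_simps)
        finally have "(real k + 1) * (\<epsilon> k * (cmod z + (cmod z)\<^sup>2)) \<le> (real k + 1) * (2 * C * q ^ k)"
          by (intro mult_left_mono) auto
        then show "(real k + 1) * ((\<bar>\<beta> k\<bar> + \<bar>\<alpha> k\<bar>) * (cmod z + (cmod z)\<^sup>2)) \<le> 2 * C * ((real k + 1) * q ^ k)"
          unfolding ee by (simp add: algebra_simps)
      qed
      also have "\<dots> = 2 * C * (\<Sum>k<n. (real k + 1) * q ^ k)" by (simp add: sum_distrib_left)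
      also have "\<dots> \<le> 2 * C * (1 / (1 - q)\<^sup>2)"
        using C0 geo_bound[OF q0 q1, of n] by (intro mult_left_mono) auto
      finally have PE: "P \<le> A / 2" unfolding A_def by simp
      have gb: "cmod (Gfun a b n z) \<le> P * r ^ (2 * n)" "cmod (Cfun a b n z) \<le> (real n + 1) * (P * r ^ (2 * n))"
        using GB[of n z] unfolding r_def P_def by auto
      have rp: "0 \<le> r ^ (2 * n)" unfolding r_def by simp
      have "cmod (Gfun a b n z) + cmod (Cfun a b n z) \<le> (real n + 2) * (P * r ^ (2 * n))"
        using gb by (simp add: algebra_simps)
      also have "\<dots> \<le> (2 * (1 + real n)) * ((A / 2) * r ^ (2 * n))"
      proof -
        have h1: "P * r ^ (2 * n) \<le> A / 2 * r ^ (2 * n)" using PE rp by (rule mult_right_mono)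
        have h2: "real n + 2 \<le> 2 * (1 + real n)" by simp
        have h3: "0 \<le> P * r ^ (2 * n)" using gb(1) norm_ge_zero[of "Gfun a b n z"] by linarith
        have h4: "0 \<le> 2 * (1 + real n)" by simp
        show ?thesis by (rule mult_mono[OF h2 h1 h4 h3])
      qed
      also have "\<dots> = A * (1 + real n) * r ^ (2 * n)" by (simp add: algebra_simps)
      finally show "cmod (Gfun a b n z) + cmod (Cfun a b n z) \<le> A * (1 + real n) * (max 1 (cmod z)) ^ (2 * n)"
        unfolding r_def .
    qed
  qed
  have e: "\<epsilon> = (\<lambda>n. \<bar>b (Suc n)\<bar> + \<bar>(a (Suc n))\<^sup>2 - 1\<bar>)" unfolding \<epsilon>_def ..
  have g1: "summable (\<lambda>n. \<bar>b (Suc n)\<bar> + \<bar>(a (Suc n))\<^sup>2 - 1\<bar>) \<longrightarrow>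
       (\<forall>z. cmod z \<le> 1 \<and> z \<noteq> 1 \<and> z \<noteq> -1 \<longrightarrow>
           bdd_above (range (\<lambda>n. cmod (Gfun a b n z) + cmod (Cfun a b n z)))) \<and>
       (\<forall>K. compact K \<and> K \<subseteq> cball 0 1 - {1, -1} \<longrightarrow>
           (\<exists>M. \<forall>z\<in>K. \<forall>n. cmod (Gfun a b n z) + cmod (Cfun a b n z) \<le> M))"
    using part1 unfolding e by (rule impI)
  have g2: "summable (\<lambda>n. real (Suc n) * (\<bar>b (Suc n)\<bar> + \<bar>(a (Suc n))\<^sup>2 - 1\<bar>)) \<longrightarrow>
       (\<exists>A1. \<forall>n z. cmod z \<le> 1 \<longrightarrow>
           cmod (Gfun a b n z) \<le> A1 \<and> cmod (Cfun a b n z) / (1 + real n) \<le> A1)"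
    using part2 unfolding e by (rule impI)
  have g3: "\<forall>C R. R > 1 \<and> (\<forall>n\<ge>1. \<bar>b n\<bar> + \<bar>(a n)\<^sup>2 - 1\<bar> \<le> C * R powr (- 2 * real n)) \<longrightarrow>
       (\<exists>A2. \<forall>z n. cmod z < R \<longrightarrow>
           cmod (Gfun a b n z) + cmod (Cfun a b n z)
             \<le> A2 * (1 + real n) * (max 1 (cmod z)) ^ (2 * n))"
  proof (intro allI impI)
    fix C R :: real
    assume h: "1 < R \<and> (\<forall>n\<ge>1. \<bar>b n\<bar> + \<bar>(a n)\<^sup>2 - 1\<bar> \<le> C * R powr (- 2 * real n))"
    show "\<exists>A2. \<forall>z n. cmod z < R \<longrightarrow> cmod (Gfun a b n z) + cmod (Cfun a b n z) \<le> A2 * (1 + real n) * (max 1 (cmod z)) ^ (2 * n)"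
      using h by (intro part3) auto
  qed
  show ?thesis by (intro conjI g1 g2 g3)
qed

end
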